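(* Let $(A,\leq,\cdot,/)$ be a narhoop and $\theta$ a unital congruence on $(A,\cdot,/)$. Then: (1) $N_\theta$ is closed under $\cdot$ and $/$ (i.e. is a subnarhoop of $A$); (2) for all $x,y\in A$, if $x\leq y$ and $x\in N_\theta$ then $y\in N_\theta$; (3) $\phi(N_\theta)\subseteq N_\theta$ for every $\phi\in\mathrm{Inn}(A)$.
   Context: Write $xy$ for $x\cdot y$; $\cdot$ binds more strongly than $/$, and $/$ binds more strongly than $\sqcap$, where $x\sqcap y := (x/y)y$. A right-residuated magma is a structure $(A,\leq,\cdot,/)$ where $(A,\leq)$ is a poset and $xy\leq z\iff x\leq z/y$ for all $x,y,z\in A$. A narhoop is a right-residuated magma such that for all $x,y$: $x\leq y\iff x\sqcap y = x = y\sqcap x$. A congruence $\theta$ on $(A,\cdot,/)$ is unital if $x/x\mathrel{\theta} y/y$ for all $x,y\in A$. For a unital congruence $\theta$, $N_\theta=\{x\in A\mid x\mathrel{\theta} y/y \text{ for some (equivalently, all) } y\in A\}$. For $x,y\in A$ define maps $A\to A$ by $\phi_{1,x,y}(z)=((zx)y)/(xy)$, $\phi_{2,x,y}(z)=((zx)/y)/(x/y)$, $\phi_{3,x,y}(z)=(x(zy))/(xy)$, $\phi_{4,x,y}(z)=(x/(zy))/(x/y)$, $\phi_{5,x,y}(z)=(xy)/(x(zy))$, $\phi_{6,x,y}(z)=(x/y)/(x/(zy))$. $\mathrm{Inn}(A)$ is the semigroup of maps $A\to A$ under composition generated by all $\phi_{i,x,y}$, $i=1,\dots,6$, $x,y\in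 A$. *)

theory Defs
  imports Main
begin

text \<open>A structure (A, le, m, d) with carrier the whole type 'a: le is the order,
 m is the product (x\<cdot>y = m x y), d is the right residual (x/y = d x y).\<close>

definition meetop :: "('a \<Rightarrow> 'a \<Rightarrow> 'a) \<Rightarrow> ('a \<Rightarrow> 'a \<Rightarrow> 'a) \<Rightarrow> 'a \<Rightarrow> 'a \<Rightarrow> 'a" where
  "meetop m d x y = m (d x y) y"

definition right_residuated_magma ::
  "('a \<Rightarrow> 'a \<Rightarrow> bool) \<Rightarrow> ('a \<Rightarrow> 'a \<Rightarrow> 'a) \<Rightarrow> ('a \<Rightarrow> 'a \<Rightarrow> 'a) \<Rightarrow> bool" where
  "right_residuated_magma le m d \<longleftrightarrow>
     (\<forall>x. le x x) \<and> (\<forall>x y. le x y \<and> le y x \<longrightarrow> x = y) \<and>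
     (\<forall>x y z. le x y \<and> le y z \<longrightarrow> le x z) \<and>
     (\<forall>x y z. le (m x y) z \<longleftrightarrow> le x (d z y))"

definition narhoop ::
  "('a \<Rightarrow> 'a \<Rightarrow> bool) \<Rightarrow> ('a \<Rightarrow> 'a \<Rightarrow> 'a) \<Rightarrow> ('a \<Rightarrow> 'a \<Rightarrow> 'a) \<Rightarrow> bool" where
  "narhoop le m d \<longleftrightarrow> right_residuated_magma le m d \<and>
     (\<forall>x y. le x y \<longleftrightarrow> (meetop m d x y = x \<and> meetop m d y x = x))"

definition congruence ::
  "('a \<Rightarrow> 'a \<Rightarrow> 'a) \<Rightarrow> ('a \<Rightarrow> 'a \<Rightarrow> 'a) \<Rightarrow> ('a \<Rightarrow> 'a \<Rightarrow> bool) \<Rightarrow> bool" where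
  "congruence m d \<theta> \<longleftrightarrow> equivp \<theta> \<and>
     (\<forall>x x' y y'. \<theta> x x' \<and> \<theta> y y' \<longrightarrow> \<theta> (m x y) (m x' y') \<and> \<theta> (d x y) (d x' y'))"

definition unital_congruence ::
  "('a \<Rightarrow> 'a \<Rightarrow> 'a) \<Rightarrow> ('a \<Rightarrow> 'a \<Rightarrow> 'a) \<Rightarrow> ('a \<Rightarrow> 'a \<Rightarrow> bool) \<Rightarrow> bool" where
  "unital_congruence m d \<theta> \<longleftrightarrow> congruence m d \<theta> \<and> (\<forall>x y. \<theta> (d x x) (d y y))"

definition Nset :: "('a \<Rightarrow> 'a \<Rightarrow> 'a) \<Rightarrow> ('a \<Rightarrow> 'a \<Rightarrow> bool) \<Rightarrow> 'a set" where
  "Nset d \<theta> = {x. \<exists>y. \<theta> x (d y y)}"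

definition phi :: "('a \<Rightarrow> 'a \<Rightarrow> 'a) \<Rightarrow> ('a \<Rightarrow> 'a \<Rightarrow> 'a) \<Rightarrow> nat \<Rightarrow> 'a \<Rightarrow> 'a \<Rightarrow> 'a \<Rightarrow> 'a" where
  "phi m d i x y = (\<lambda>z.
     if i = 1 then d (m (m z x) y) (m x y)
     else if i = 2 then d (d (m z x) y) (d x y)
     else if i = 3 then d (m x (m z y)) (m x y)
     else if i = 4 then d (d x (m z y)) (d x y)
     else if i = 5 then d (m x y) (m x (m z y))
     else d (d x y) (d x (m z y)))"

inductive_set Inn :: "('a \<Rightarrow> 'a \<Rightarrow> 'a) \<Rightarrow> ('a \<Rightarrow> 'a \<Rightarrow> 'a) \<Rightarrow> ('a \<Rightarrow> 'a) set"
  for m d where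
  gen: "i \<in> {1..6} \<Longrightarrow> phi m d i x y \<in> Inn m d"
| comp: "f \<in> Inn m d \<Longrightarrow> g \<in> Inn m d \<Longrightarrow> f \<circ> g \<in> Inn m d"

end

theory Submission
  imports Defs
begin

lemma mainTheorem12_aux:
  fixes le :: "'a \<Rightarrow> 'a \<Rightarrow> bool" and m d :: "'a \<Rightarrow> 'a \<Rightarrow> 'a"
    and \<theta> :: "'a \<Rightarrow> 'a \<Rightarrow> bool"
  assumes N: "narhoop le m d" and U: "unital_congruence m d \<theta>"
  shows "(\<forall>x\<in>Nset d \<theta>. \<forall>y\<in>Nset d \<theta>. m x y \<in> Nset d \<theta> \<and> d x y \<in> Nset d \<theta>)
    \<and> (\<forall>x y. le x y \<and> x \<in> Nset d \<theta> \<longrightarrow> y \<in> Nset d \<theta>)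
    \<and> (\<forall>f\<in>Inn m d. f ` Nset d \<theta> \<subseteq> Nset d \<theta>)"
proof -
  have refl: "\<And>x. le x x" and anti: "\<And>x y. le x y \<Longrightarrow> le y x \<Longrightarrow> x = y"
    and trans: "\<And>x y z. le x y \<Longrightarrow> le y z \<Longrightarrow> le x z"
    and res: "\<And>x y z. le (m x y) z \<longleftrightarrow> le x (d z y)"
    and nar: "\<And>x y. le x y \<longleftrightarrow> (m (d x y) y = x \<and> m (d y x) x = x)"
    using N unfolding narhoop_def right_residuated_magma_def meetop_def by blast+
  have eqv: "equivp \<theta>" and cm: "\<And>x x' y y'. \<theta> x x' \<Longrightarrow> \<theta> y y' \<Longrightarrow> \<theta> (m x y) (m x' y')"
    and cd: "\<And>x x' y y'. \<theta> x x' \<Longrightarrow> \<theta> y y' \<Longrightarrow> \<theta> (d x y) (d x' y')"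
    and un: "\<And>x y. \<theta> (d x x) (d y y)"
    using U unfolding unital_congruence_def congruence_def by blast+
  have tr: "\<And>a. \<theta> a a" using eqv by (meson equivp_reflp)
  have sy: "\<And>a b. \<theta> a b \<Longrightarrow> \<theta> b a" using eqv by (meson equivp_symp)
  have tt: "\<And>a b c. \<theta> a b \<Longrightarrow> \<theta> b c \<Longrightarrow> \<theta> a c" using eqv by (meson equivp_transp)
  have Nd: "\<And>x w. x \<in> Nset d \<theta> \<longleftrightarrow> \<theta> x (d w w)"
    unfolding Nset_def using un tt by blast
  have idl: "\<And>x. m (d x x) x = x" using nar refl by blast
  have mono: "\<And>a b c. le a b \<Longrightarrow> le (m a c) (m b c)"
  proof -
    fix a b c assume "le a b"
    moreover have "le b (d (m b c) c)" using res refl by blast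
    ultimately show "le (m a c) (m b c)" using res trans by blast
  qed
  have upr: "\<And>a b. le a (d (m a b) b)" using res refl by blast
  have L2: "\<And>a b. le a b \<Longrightarrow> d b a = d a a"
  proof -
    fix a b assume ab: "le a b"
    have "m (d b a) a = a" using nar ab by blast
    hence 1: "le (d b a) (d a a)" using res refl by metis
    have "le (m (d a a) a) b" using idl ab by simp
    hence 2: "le (d a a) (d b a)" using res by blast
    show "d b a = d a a" using anti 1 2 by blast
  qed
  have sand: "\<And>p q r s. le p q \<Longrightarrow> le r s \<Longrightarrow> \<theta> p s \<Longrightarrow> \<theta> q r \<Longrightarrow> \<theta> p r"
  proof -
    fix p q r s assume a: "le p q" "le r s" "\<theta> p s" "\<theta> q r"
    have "p = m (d q p) p" using nar a(1) by simp
    moreover have "r = m (d r s) s" using nar a(2) by simp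
    moreover have "\<theta> (m (d q p) p) (m (d r s) s)" by (rule cm[OF cd[OF a(4) a(3)] a(3)])
    ultimately show "\<theta> p r" by simp
  qed
  have lid: "\<And>z w. z \<in> Nset d \<theta> \<Longrightarrow> \<theta> (m z w) w"
  proof -
    fix z w assume "z \<in> Nset d \<theta>"
    hence "\<theta> z (d w w)" using Nd by blast
    hence "\<theta> (m z w) (m (d w w) w)" by (rule cm[OF _ tr])
    thus "\<theta> (m z w) w" using idl by simp
  qed
  have P1: "\<forall>x\<in>Nset d \<theta>. \<forall>y\<in>Nset d \<theta>. m x y \<in> Nset d \<theta> \<and> d x y \<in> Nset d \<theta>"
  proof (intro ballI conjI)
    fix x y assume x: "x \<in> Nset d \<theta>" and y: "y \<in> Nset d \<theta>"
    have xy1: "\<theta> (m x y) y" using lid[OF x] .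
    have yy: "\<theta> y (d y y)" using y Nd by blast
    show "m x y \<in> Nset d \<theta>" using Nd tt[OF xy1 yy] by blast
    have "\<theta> x (d y y)" using x Nd by blast
    hence "\<theta> x y" using tt sy[OF yy] by blast
    hence "\<theta> (d x y) (d y y)" by (rule cd[OF _ tr])
    thus "d x y \<in> Nset d \<theta>" using Nd by blast
  qed
  have P2: "\<forall>x y. le x y \<and> x \<in> Nset d \<theta> \<longrightarrow> y \<in> Nset d \<theta>"
  proof (intro allI impI)
    fix x y assume "le x y \<and> x \<in> Nset d \<theta>"
    hence xy: "le x y" and x: "x \<in> Nset d \<theta>" by auto
    define v where "v = m x x"
    have vle: "le v (m y x)" unfolding v_def using mono xy by blast
    have vx: "\<theta> x v" unfolding v_def by (rule sy[OF lid[OF x]])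
    define Y where "Y = d (m y x) x"
    have yY: "le y Y" unfolding Y_def using upr by blast
    have "\<theta> Y (d (m y x) v)" unfolding Y_def by (rule cd[OF tr vx])
    hence "\<theta> Y (d v v)" using L2 vle by simp
    hence Y: "Y \<in> Nset d \<theta>" using Nd by blast
    have "\<theta> Y (d x x)" "\<theta> x (d x x)" using Y x Nd by blast+
    hence "\<theta> Y x" using tt sy by blast
    hence "\<theta> y x" by (rule sand[OF yY xy tr])
    moreover have "\<theta> x (d x x)" using x Nd by blast
    ultimately show "y \<in> Nset d \<theta>" using Nd tt by blast
  qed
  have P3: "\<And>f. f \<in> Inn m d \<Longrightarrow> f ` Nset d \<theta> \<subseteq> Nset d \<theta>"
  proof -
    fix f assume "f \<in> Inn m d"
    thus "f ` Nset d \<theta> \<subseteq> Nset d \<theta>"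
    proof (induction rule: Inn.induct)
      case (gen i x y)
      show ?case
      proof (rule image_subsetI)
        fix z assume z: "z \<in> Nset d \<theta>"
        have zx: "\<theta> (m z x) x" and zy: "\<theta> (m z y) y" using lid z by auto
        have ND: "\<And>a b. \<theta> a (d b b) \<Longrightarrow> a \<in> Nset d \<theta>" using Nd by blast
        have "i = 1 \<or> i = 2 \<or> i = 3 \<or> i = 4 \<or> i = 5 \<or> i = 6" using gen by auto
        thus "phi m d i x y z \<in> Nset d \<theta>"
        proof (elim disjE)
          assume "i = 1"
          have "\<theta> (d (m (m z x) y) (m x y)) (d (m x y) (m x y))" by (rule cd[OF cm[OF zx tr] tr])
          thus ?thesis unfolding phi_def using ND \<open>i = 1\<close> by simp
        next
          assume "i = 2"
          have "\<theta> (d (d (m z x) y) (d x y)) (d (d x y) (d x y))" by (rule cd[OF cd[OF zx tr] tr])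
          thus ?thesis unfolding phi_def using ND \<open>i = 2\<close> by simp
        next
          assume "i = 3"
          have "\<theta> (d (m x (m z y)) (m x y)) (d (m x y) (m x y))" by (rule cd[OF cm[OF tr zy] tr])
          thus ?thesis unfolding phi_def using ND \<open>i = 3\<close> by simp
        next
          assume "i = 4"
          have "\<theta> (d (d x (m z y)) (d x y)) (d (d x y) (d x y))" by (rule cd[OF cd[OF tr zy] tr])
          thus ?thesis unfolding phi_def using ND \<open>i = 4\<close> by simp
        next
          assume "i = 5"
          have "\<theta> (d (m x y) (m x (m z y))) (d (m x y) (m x y))" by (rule cd[OF tr cm[OF tr zy]])
          thus ?thesis unfolding phi_def using ND \<open>i = 5\<close> by simp
        next
          assume "i = 6"
          have "\<theta> (d (d x y) (d x (m z y))) (d (d x y) (d x y))" by (rule cd[OF tr cd[OF tr zy]])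
          thus ?thesis unfolding phi_def using ND \<open>i = 6\<close> by simp
        qed
      qed
    next
      case (comp f g)
      thus ?case by (auto simp add: image_subset_iff)
    qed
  qed
  show ?thesis using P1 P2 P3 by blast
qed

theorem mainTheorem12:
  fixes le :: "'a \<Rightarrow> 'a \<Rightarrow> bool" and m d :: "'a \<Rightarrow> 'a \<Rightarrow> 'a"
    and \<theta> :: "'a \<Rightarrow> 'a \<Rightarrow> bool"
  assumes "narhoop le m d" and "unital_congruence m d \<theta>"
  shows "(\<forall>x\<in>Nset d \<theta>. \<forall>y\<in>Nset d \<theta>. m x y \<in> Nset d \<theta> \<and> d x y \<in> Nset d \<theta>)
    \<and> (\<forall>x y. le x y \<and> x \<in> Nset d \<theta> \<longrightarrow> y \<in> Nset d \<theta>)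
    \<and> (\<forall>f\<in>Inn m d. f ` Nset d \<theta> \<subseteq> Nset d \<theta>)"
  using mainTheorem12_aux[OF assms] .

end
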